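(* Let $a,b>0$, $I=[g(b),b]$, $J=[f(a),a]$, and let $g$ and $f$ be decreasing homeomorphisms of $I$ and $J$ onto their images $g(I)\subseteq I$ and $f(J)\subseteq J$ such that (1) $0$ is an attracting fixed point of both $f$ and $g$; (2) $g^2(x)<x$ for all $x\in(0,b]$; (3) $f^2(x)<x$ for all $x\in(0,a]$. Then there exists a (not necessarily unique) homeomorphism $h:[f(a),a]\to[g(b),b]$ such that $g(h(x))=h(f(x))$ for all $x\in[f(a),a]$.
   Context: A fixed point $p$ of a homeomorphism $\phi$ is attracting if there is a neighbourhood $U$ of $p$ with $\phi^n(x)\to p$ for all $x\in U$. $\phi^2$ denotes $\phi\circ\phi$. *)

theory Defs
  imports "HOL-Analysis.Analysis"
begin

definition attracting_fixed_point :: "(real \<Rightarrow> real) \<Rightarrow> real set \<Rightarrow> real \<Rightarrow> bool" where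
  "attracting_fixed_point \<phi> S p \<longleftrightarrow> p \<in> S \<and> \<phi> p = p \<and>
     (\<exists>U. open U \<and> p \<in> U \<and> (\<forall>x\<in>U \<inter> S. (\<lambda>n. (\<phi> ^^ n) x) \<longlonglongrightarrow> p))"

end

theory Submission imports Defs begin

lemma mono_cont_Icc:
  fixes h :: "real \<Rightarrow> real"
  assumes cd: "c \<le> d" and mono: "\<And>x y. x \<in> {c..d} \<Longrightarrow> y \<in> {c..d} \<Longrightarrow> x < y \<Longrightarrow> h x < h y"
    and img: "h ` {c..d} = {e..f}"
  shows "continuous_on {c..d} h"
proof -
  have "h c \<in> {e..f}" using img cd by auto
  then have ef0: "e \<le> f" by simp
  have hc: "h c = e"
  proof -
    have "e \<in> h ` {c..d}" unfolding img using ef0 by simp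
    then obtain x where x: "x \<in> {c..d}" "h x = e" by auto
    have "h c \<le> h x" using mono[of c x] x cd by (cases "c = x") auto
    moreover have "h c \<ge> e" using img cd by auto
    ultimately show ?thesis using x by auto
  qed
  have hd: "h d = f"
  proof -
    have "f \<in> h ` {c..d}" unfolding img using ef0 by simp
    then obtain x where x: "x \<in> {c..d}" "h x = f" by auto
    have "h x \<le> h d" using mono[of x d] x cd by (cases "d = x") auto
    moreover have "h d \<le> f" using img cd by auto
    ultimately show ?thesis using x by auto
  qed
  have ef: "e \<le> f" using hc hd img cd by auto
  define k where "k x = (if x < c then x - c + e else if x > d then x - d + f else h x)" for x
  have hin: "x \<in> {c..d} \<Longrightarrow> h x \<in> {e..f}" for x using img by auto
  have kmono: "k x \<le> k y" if "x \<le> y" for x y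
  proof -
    have "x \<in> {c..d} \<Longrightarrow> y \<in> {c..d} \<Longrightarrow> h x \<le> h y" using mono[of x y] that by (cases "x = y") auto
    then show ?thesis using that hin[of x] hin[of y] cd ef0 unfolding k_def by (auto simp: not_less)
  qed
  have rk: "z \<in> range k" for z :: real
  proof -
    show "z \<in> range k"
    proof (cases "z < e")
      case True
      then have "k (z - e + c) = z" unfolding k_def by auto
      then show ?thesis by (metis rangeI)
    next
      case False
      show ?thesis
      proof (cases "z > f")
        case True
        then have "k (z - f + d) = z" unfolding k_def using cd by auto
        then show ?thesis by (metis rangeI)
      next
        case False2: False
        then have "z \<in> h ` {c..d}" using img \<open>\<not> z < e\<close> by auto
        then obtain x where "x \<in> {c..d}" "h x = z" by auto
        then have "k x = z" unfolding k_def by auto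
        then show ?thesis by (metis rangeI)
      qed
    qed
  qed
  then have "k ` UNIV = UNIV" by auto
  then have "continuous_on UNIV k" by (intro continuous_onI_mono) (auto intro: kmono)
  then have "continuous_on {c..d} k" by (rule continuous_on_subset) auto
  then show ?thesis by (rule continuous_on_cong[THEN iffD1, rotated 2]) (auto simp: k_def)
qed


locale dyn =
  fixes F :: "real \<Rightarrow> real" and a :: real
  assumes apos: "a > 0" and cont: "continuous_on {0..a} F"
  and smono: "\<And>x y. x \<in> {0..a} \<Longrightarrow> y \<in> {0..a} \<Longrightarrow> x < y \<Longrightarrow> F x < F y"
  and F0: "F 0 = 0" and below: "\<And>x. x \<in> {0<..a} \<Longrightarrow> 0 < F x \<and> F x < x"
begin

lemma Fin: "x \<in> {0..a} \<Longrightarrow> F x \<in> {0..a}"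
  using below[of x] F0 by (cases "x = 0") auto

lemma iter_in: "x \<in> {0..a} \<Longrightarrow> (F^^n) x \<in> {0..a}"
proof (induction n)
  case (Suc n) then show ?case using Fin[of "(F^^n) x"] by simp
qed simp

lemma iter_pos: "x \<in> {0<..a} \<Longrightarrow> (F^^n) x \<in> {0<..a}"
  by (induction n) (use below in fastforce)+

lemma iter_smono: "x \<in> {0..a} \<Longrightarrow> y \<in> {0..a} \<Longrightarrow> x < y \<Longrightarrow> (F^^n) x < (F^^n) y"
proof (induction n)
  case (Suc n) then show ?case using smono[of "(F^^n) x" "(F^^n) y"] iter_in[of x n] iter_in[of y n] by simp
qed simp

lemma iter_mono: "x \<in> {0..a} \<Longrightarrow> y \<in> {0..a} \<Longrightarrow> x \<le> y \<Longrightarrow> (F^^n) x \<le> (F^^n) y"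
  using iter_smono[of x y n] by (cases "x = y") auto

lemma iter_cont: "continuous_on {0..a} (F^^n)"
proof (induction n)
  case 0 then show ?case by (simp add: continuous_on_id)
next
  case (Suc n)
  have "continuous_on {0..a} (F \<circ> (F^^n))"
    by (rule continuous_on_compose[OF Suc continuous_on_subset[OF cont]]) (auto intro: iter_in)
  then show ?case by simp
qed

definition p :: "nat \<Rightarrow> real" where "p n = (F^^n) a"

lemma pn: "(F^^n) a = p n" by (simp add: p_def)
lemma p0: "p 0 = a" by (simp add: p_def)

lemma p_pos: "p n \<in> {0<..a}" unfolding p_def using apos by (intro iter_pos) auto

lemma p_Suc: "p (Suc n) = F (p n)" unfolding p_def by simp

lemma p_Suc_less: "p (Suc n) < p n" using p_Suc below p_pos by auto

lemma p_less: "m < n \<Longrightarrow> p n < p m"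
proof (induction n)
  case 0 then show ?case by simp
next
  case (Suc n) then show ?case using p_Suc_less[of n] by (cases "m = n") auto
qed

lemma p_le: "m \<le> n \<Longrightarrow> p n \<le> p m"
  using p_less[of m n] by (cases "m = n") auto

lemma p_lim: "p \<longlonglongrightarrow> 0"
proof -
  have "decseq p" by (intro decseq_SucI) (use p_Suc_less in \<open>auto intro: less_imp_le\<close>)
  then obtain L where L: "p \<longlonglongrightarrow> L" "\<forall>i. L \<le> p i"
    using decseq_convergent[of p 0] p_pos by (auto intro: less_imp_le)
  have L0: "L \<ge> 0"
    using L(1) p_pos by (intro LIMSEQ_le_const[of p]) (auto intro!: less_imp_le always_eventually)
  have La: "L \<le> a" using L(2)[rule_format, of 0] by (simp add: p_def)
  have "(\<lambda>n. F (p n)) \<longlonglongrightarrow> F L"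
    by (rule continuous_on_tendsto_compose[OF cont L(1)]) (use L0 La p_pos in \<open>auto intro!: less_imp_le always_eventually\<close>)
  moreover have "(\<lambda>n. F (p n)) \<longlonglongrightarrow> L"
    using LIMSEQ_Suc[OF L(1)] unfolding p_Suc by simp
  ultimately have "F L = L" using LIMSEQ_unique by blast
  then have "L = 0" using below[of L] L0 La by fastforce
  then show ?thesis using L by simp
qed

lemma p_bracket:
  assumes "x \<in> {0<..a}" shows "\<exists>n. p (Suc n) < x \<and> x \<le> p n"
proof -
  have "\<exists>n. p n < x" using order_tendstoD(2)[OF p_lim, of x] assms
    by (auto simp: eventually_sequentially)
  then obtain n where n: "p n < x" by blast
  define m where "m = (LEAST n. p n < x)"
  have m: "p m < x" unfolding m_def by (rule LeastI[of _ n]) (rule n)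
  have "m \<noteq> 0"
  proof
    assume "m = 0" then show False using m assms p0 by auto
  qed
  then obtain k where k: "m = Suc k" by (cases m) auto
  have "\<not> p k < x" using not_less_Least[of k "\<lambda>n. p n < x"] k unfolding m_def by auto
  then show ?thesis using m k by auto
qed

lemma iter_p1: "(F^^n) (p (Suc 0)) = p (Suc n)"
  unfolding p_def using funpow_add[of n 1 F] by simp

lemma rep_range:
  assumes "y \<in> {p 1<..a}" shows "(F^^n) y \<in> {p (Suc n)<..p n}"
proof -
  have p1: "p 1 \<in> {0..a}" using p_pos[of 1] by auto
  have y: "y \<in> {0..a}" using assms p1 by auto
  show ?thesis using iter_smono[OF p1 y, of n] iter_mono[OF y _ , of a n] assms apos
    by (auto simp: iter_p1 pn)
qed

lemma rep_exists:
  assumes "x \<in> {0<..a}" shows "\<exists>n y. y \<in> {p 1<..a} \<and> (F^^n) y = x"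
proof -
  obtain n where n: "p (Suc n) < x" "x \<le> p n" using p_bracket[OF assms] by blast
  have p1: "p 1 \<le> a" using p_pos[of 1] by auto
  have "continuous_on {p 1..a} (F^^n)"
    by (rule continuous_on_subset[OF iter_cont]) (use p_pos[of 1] in auto)
  then obtain y where y: "p 1 \<le> y" "y \<le> a" "(F^^n) y = x"
    using IVT'[of "F^^n" "p 1" x a] n p1 by (auto simp: iter_p1 pn)
  have "y \<noteq> p 1" using y n iter_p1 by auto
  then have "y \<in> {p 1<..a}" using y by auto
  then show ?thesis using y(3) by blast
qed

lemma rep_unique:
  assumes "y \<in> {p 1<..a}" "y' \<in> {p 1<..a}" "(F^^n) y = (F^^m) y'"
  shows "n = m \<and> y = y'"
proof -
  have A: "(F^^n) y \<in> {p (Suc n)<..p n}" "(F^^m) y' \<in> {p (Suc m)<..p m}"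
    using rep_range[OF assms(1), of n] rep_range[OF assms(2), of m] by auto
  have nm: "n = m"
  proof (rule ccontr)
    assume "n \<noteq> m"
    then consider "Suc n \<le> m" | "Suc m \<le> n" by linarith
    then show False
    proof cases
      case 1 then show ?thesis using p_le[OF 1] A assms(3) by auto
    next
      case 2 then show ?thesis using p_le[OF 2] A assms(3) by auto
    qed
  qed
  have p1: "p 1 \<ge> 0" using p_pos[of 1] by auto
  have "y = y'"
  proof (rule ccontr)
    assume "y \<noteq> y'"
    then consider "y < y'" | "y' < y" by linarith
    then show False
      using iter_smono[of y y' n] iter_smono[of y' y n] assms nm p1 by (cases; auto)
  qed
  then show ?thesis using nm by auto
qed

end


lemma conj1d:
  assumes dF: "dyn F a" and dG: "dyn G b"
  shows "\<exists>H. H 0 = 0 \<and> (\<forall>x\<in>{0<..a}. H x \<in> {0<..b}) \<and>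
     (\<forall>x\<in>{0..a}. \<forall>y\<in>{0..a}. x < y \<longrightarrow> H x < H y) \<and> {0<..b} \<subseteq> H ` {0<..a} \<and>
     (\<forall>x\<in>{0..a}. H (F x) = G (H x))"
proof -
  interpret Fd: dyn F a by (rule dF)
  interpret Gd: dyn G b by (rule dG)
  define P where "P = Fd.p 1"
  define Q where "Q = Gd.p 1"
  have P: "0 < P" "P < a" using Fd.p_pos[of 1] Fd.p_Suc_less[of 0] Fd.p0 unfolding P_def by auto
  have Q: "0 < Q" "Q < b" using Gd.p_pos[of 1] Gd.p_Suc_less[of 0] Gd.p0 unfolding Q_def by auto
  define \<phi> where "\<phi> y = Q + (y - P) * (b - Q) / (a - P)" for y
  define \<psi> where "\<psi> z = P + (z - Q) * (a - P) / (b - Q)" for z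
  have \<phi>_range: "\<phi> y \<in> {Q<..b}" if "y \<in> {P<..a}" for y
  proof -
    have "0 < (y - P) * (b - Q) / (a - P)" using that P Q by auto
    moreover have "(y - P) * (b - Q) / (a - P) \<le> b - Q"
      using that P Q by (simp add: divide_le_eq mult_left_mono mult.commute)
    ultimately show ?thesis unfolding \<phi>_def by auto
  qed
  have \<phi>_mono: "\<phi> y < \<phi> y'" if "y < y'" for y y'
  proof -
    have "(y - P) * (b - Q) < (y' - P) * (b - Q)" using that Q by (intro mult_strict_right_mono) auto
    then show ?thesis unfolding \<phi>_def using P by (simp add: divide_strict_right_mono)
  qed
  have \<psi>_range: "\<psi> z \<in> {P<..a}" if "z \<in> {Q<..b}" for z
  proof -
    have "0 < (z - Q) * (a - P) / (b - Q)" using that P Q by auto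
    moreover have "(z - Q) * (a - P) / (b - Q) \<le> a - P"
      using that P Q by (simp add: divide_le_eq mult_left_mono mult.commute)
    ultimately show ?thesis unfolding \<psi>_def by auto
  qed
  have \<phi>\<psi>: "\<phi> (\<psi> z) = z" for z
  proof -
    have ne: "a - P \<noteq> 0" "b - Q \<noteq> 0" using P Q by auto
    have "(z - Q) * (a - P) / (b - Q) * (b - Q) / (a - P) = z - Q" using ne by simp
    then show ?thesis unfolding \<phi>_def \<psi>_def by simp
  qed
  have Ppos: "{P<..a} \<subseteq> {0<..a}" using P by auto
  have Qpos: "{Q<..b} \<subseteq> {0<..b}" using Q by auto
  define H where "H x = (if x = 0 then 0 else
      THE z. \<exists>n y. y \<in> {P<..a} \<and> (F^^n) y = x \<and> z = (G^^n) (\<phi> y))" for x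
  have Hrep: "H ((F^^n) y) = (G^^n) (\<phi> y)" if y: "y \<in> {P<..a}" for n y
  proof -
    have "(F^^n) y \<in> {0<..a}" using Ppos y by (intro Fd.iter_pos) auto
    then have ne: "(F^^n) y \<noteq> 0" by auto
    show ?thesis unfolding H_def if_not_P[OF ne]
    proof (rule the_equality)
      show "\<exists>n' y'. y' \<in> {P<..a} \<and> (F^^n') y' = (F^^n) y \<and> (G^^n) (\<phi> y) = (G^^n') (\<phi> y')"
        using y by blast
    next
      fix z assume "\<exists>n' y'. y' \<in> {P<..a} \<and> (F^^n') y' = (F^^n) y \<and> z = (G^^n') (\<phi> y')"
      then obtain n' y' where h: "y' \<in> {P<..a}" "(F^^n') y' = (F^^n) y" "z = (G^^n') (\<phi> y')" by blast
      have "n' = n \<and> y' = y" using Fd.rep_unique[of y' y n' n] h y unfolding P_def by auto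
      then show "z = (G^^n) (\<phi> y)" using h by simp
    qed
  qed
  have rep: "\<exists>n y. y \<in> {P<..a} \<and> (F^^n) y = x" if "x \<in> {0<..a}" for x
    using Fd.rep_exists[OF that] unfolding P_def by blast
  have H0: "H 0 = 0" unfolding H_def by simp
  have Hpos: "H x \<in> {0<..b}" if xa: "x \<in> {0<..a}" for x
  proof -
    obtain n y where ny: "y \<in> {P<..a}" "(F^^n) y = x" using rep[OF xa] by blast
    have "(G^^n) (\<phi> y) \<in> {0<..b}" using Gd.iter_pos \<phi>_range[OF ny(1)] Qpos by blast
    then show ?thesis using Hrep[OF ny(1), of n] ny(2) by simp
  qed
  have Hmono: "H x < H x'" if x: "x \<in> {0..a}" "x' \<in> {0..a}" "x < x'" for x x'
  proof (cases "x = 0")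
    case True then show ?thesis using Hpos[of x'] H0 x by auto
  next
    case False
    then have xp: "x \<in> {0<..a}" "x' \<in> {0<..a}" using x by auto
    obtain n y where ny: "y \<in> {P<..a}" "(F^^n) y = x" using rep[OF xp(1)] by blast
    obtain m y' where my: "y' \<in> {P<..a}" "(F^^m) y' = x'" using rep[OF xp(2)] by blast
    have Hx: "H x = (G^^n) (\<phi> y)" "H x' = (G^^m) (\<phi> y')" using Hrep ny my by auto
    have Rx: "x \<in> {Fd.p (Suc n)<..Fd.p n}" "x' \<in> {Fd.p (Suc m)<..Fd.p m}"
      using Fd.rep_range[of y n] Fd.rep_range[of y' m] ny my unfolding P_def by auto
    have RH: "(G^^n) (\<phi> y) \<in> {Gd.p (Suc n)<..Gd.p n}" "(G^^m) (\<phi> y') \<in> {Gd.p (Suc m)<..Gd.p m}"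
      using Gd.rep_range[of "\<phi> y" n] Gd.rep_range[of "\<phi> y'" m] \<phi>_range ny my unfolding Q_def by auto
    consider "n = m" | "n < m" | "m < n" by linarith
    then show ?thesis
    proof cases
      case 1
      have "y < y'"
      proof (rule ccontr)
        assume "\<not> y < y'"
        then have "(F^^n) y' \<le> (F^^n) y" using Fd.iter_mono[of y' y n] ny my P by auto
        then show False using ny my x 1 by auto
      qed
      then have "(G^^n) (\<phi> y) < (G^^n) (\<phi> y')"
      proof -
        have r: "\<phi> y \<in> {0..b}" "\<phi> y' \<in> {0..b}" using \<phi>_range[OF ny(1)] \<phi>_range[OF my(1)] Q by auto
        show ?thesis using Gd.iter_smono[OF r \<phi>_mono[OF \<open>y < y'\<close>]] .
      qed
      then show ?thesis using Hx 1 by simp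
    next
      case 2
      then have "Fd.p m \<le> Fd.p (Suc n)" by (intro Fd.p_le) auto
      then show ?thesis using Rx x by auto
    next
      case 3
      then have "Gd.p n \<le> Gd.p (Suc m)" by (intro Gd.p_le) auto
      then show ?thesis using RH Hx by auto
    qed
  qed
  have Hsurj: "{0<..b} \<subseteq> H ` {0<..a}"
  proof
    fix z assume z: "z \<in> {0<..b}"
    obtain m w where mw: "w \<in> {Q<..b}" "(G^^m) w = z" using Gd.rep_exists[OF z] unfolding Q_def by blast
    have y: "\<psi> w \<in> {P<..a}" using \<psi>_range[OF mw(1)] .
    have "H ((F^^m) (\<psi> w)) = z" using Hrep[OF y, of m] \<phi>\<psi> mw by simp
    moreover have "(F^^m) (\<psi> w) \<in> {0<..a}" using Fd.iter_pos y Ppos by blast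
    ultimately show "z \<in> H ` {0<..a}" by (metis image_eqI)
  qed
  have Hconj: "H (F x) = G (H x)" if x: "x \<in> {0..a}" for x
  proof (cases "x = 0")
    case True then show ?thesis using H0 Fd.F0 Gd.F0 by simp
  next
    case False
    have xp: "x \<in> {0<..a}" using x False by auto
    obtain n y where ny: "y \<in> {P<..a}" "(F^^n) y = x" using rep[OF xp] by blast
    have "F x = (F^^Suc n) y" using ny by simp
    then have "H (F x) = (G^^Suc n) (\<phi> y)" using Hrep[OF ny(1), of "Suc n"] by simp
    also have "\<dots> = G (H x)" using Hrep[OF ny(1), of n] ny by simp
    finally show ?thesis .
  qed
  show ?thesis using H0 Hpos Hmono Hsurj Hconj by blast
qed


lemma side:
  fixes \<phi> \<phi>' :: "real \<Rightarrow> real" and c :: real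
  assumes cpos: "c > 0" and hom: "homeomorphism {\<phi> c..c} (\<phi>`{\<phi> c..c}) \<phi> \<phi>'"
    and anti: "antimono_on {\<phi> c..c} \<phi>" and into: "\<phi> ` {\<phi> c..c} \<subseteq> {\<phi> c..c}"
    and z: "0 \<in> {\<phi> c..c}" "\<phi> 0 = 0" and sq: "\<forall>x\<in>{0<..c}. \<phi> (\<phi> x) < x"
  shows "\<forall>x\<in>{\<phi> c..c}. \<forall>y\<in>{\<phi> c..c}. x < y \<longrightarrow> \<phi> y < \<phi> x"
    and "\<phi> c < 0"
    and "dyn (\<lambda>x. \<phi> (\<phi> x)) c"
    and "\<forall>x\<in>{\<phi> c..<0}. \<phi>' x \<in> {0<..c} \<and> \<phi> (\<phi>' x) = x"
    and "\<forall>x\<in>{0<..c}. \<phi> x \<in> {\<phi> c..<0}"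
proof -
  define S where "S = {\<phi> c..c}"
  have inj: "\<phi>' (\<phi> x) = x" if "x \<in> S" for x using homeomorphism_apply1[OF hom] that S_def by auto
  have sdec: "\<phi> y < \<phi> x" if "x \<in> S" "y \<in> S" "x < y" for x y
  proof -
    have "\<phi> y \<le> \<phi> x" using monotone_onD[OF anti, of x y] that S_def by auto
    moreover have "\<phi> y \<noteq> \<phi> x"
    proof
      assume "\<phi> y = \<phi> x"
      then have "\<phi>' (\<phi> y) = \<phi>' (\<phi> x)" by simp
      then show False using inj[of x] inj[of y] that by simp
    qed
    ultimately show ?thesis by auto
  qed
  then show "\<forall>x\<in>{\<phi> c..c}. \<forall>y\<in>{\<phi> c..c}. x < y \<longrightarrow> \<phi> y < \<phi> x" unfolding S_def by blast
  have cS: "c \<in> S" "0 \<in> S" using z cpos S_def by auto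
  have sub: "{0..c} \<subseteq> S" using z S_def by auto
  show pc: "\<phi> c < 0" using sdec[OF cS(2) cS(1)] cpos z by simp
  have intoS: "\<phi> x \<in> S" if "x \<in> S" for x using into that unfolding S_def by blast
  have neg: "\<phi> x \<in> {\<phi> c..<0}" if "x \<in> {0<..c}" for x
    using sdec[of 0 x] sub intoS[of x] that z S_def by auto
  then show "\<forall>x\<in>{0<..c}. \<phi> x \<in> {\<phi> c..<0}" by blast
  have contS: "continuous_on S \<phi>" using homeomorphism_cont1[OF hom] S_def by simp
  show "dyn (\<lambda>x. \<phi> (\<phi> x)) c"
  proof
    show "0 < c" by fact
    have "continuous_on {0..c} (\<phi> \<circ> \<phi>)"
      by (rule continuous_on_compose[OF continuous_on_subset[OF contS sub] continuous_on_subset[OF contS]])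
         (use sub intoS in auto)
    then show "continuous_on {0..c} (\<lambda>x. \<phi> (\<phi> x))" by (simp add: o_def)
    show "\<phi> (\<phi> x) < \<phi> (\<phi> y)" if "x \<in> {0..c}" "y \<in> {0..c}" "x < y" for x y
    proof -
      have xs: "x \<in> S" "y \<in> S" using that sub by auto
      have "\<phi> y < \<phi> x" using sdec[OF xs that(3)] .
      then show ?thesis using sdec[of "\<phi> y" "\<phi> x"] intoS xs by auto
    qed
    show "\<phi> (\<phi> 0) = 0" using z by simp
    show "0 < \<phi> (\<phi> x) \<and> \<phi> (\<phi> x) < x" if "x \<in> {0<..c}" for x
      using sdec[of "\<phi> x" 0] neg[OF that] sq that cS z S_def by auto
  qed
  show "\<forall>x\<in>{\<phi> c..<0}. \<phi>' x \<in> {0<..c} \<and> \<phi> (\<phi>' x) = x"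
  proof
    fix x assume x: "x \<in> {\<phi> c..<0}"
    have "continuous_on {0..c} \<phi>" using continuous_on_subset[OF contS sub] .
    then obtain y where y: "0 \<le> y" "y \<le> c" "\<phi> y = x"
      using IVT2'[of \<phi> c x 0] x z cpos by auto
    have "y \<noteq> 0" using y x z by auto
    moreover have "\<phi>' x = y" using inj[of y] y sub by auto
    ultimately show "\<phi>' x \<in> {0<..c} \<and> \<phi> (\<phi>' x) = x" using y by auto
  qed
qed


theorem theorem6:
  fixes f g :: "real \<Rightarrow> real" and a b :: real
  assumes "a > 0" and "b > 0"
    and g_hom: "\<exists>g'. homeomorphism {g b..b} (g ` {g b..b}) g g'"
    and g_dec: "antimono_on {g b..b} g"
    and g_into: "g ` {g b..b} \<subseteq> {g b..b}"
    and f_hom: "\<exists>f'. homeomorphism {f a..a} (f ` {f a..a}) f f'"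
    and f_dec: "antimono_on {f a..a} f"
    and f_into: "f ` {f a..a} \<subseteq> {f a..a}"
    and f_attr: "attracting_fixed_point f {f a..a} 0"
    and g_attr: "attracting_fixed_point g {g b..b} 0"
    and g2: "\<forall>x\<in>{0<..b}. g (g x) < x"
    and f2: "\<forall>x\<in>{0<..a}. f (f x) < x"
  shows "\<exists>h h'. homeomorphism {f a..a} {g b..b} h h' \<and>
           (\<forall>x\<in>{f a..a}. g (h x) = h (f x))"
proof -
  obtain f' where fh: "homeomorphism {f a..a} (f ` {f a..a}) f f'" using f_hom by blast
  obtain g' where gh: "homeomorphism {g b..b} (g ` {g b..b}) g g'" using g_hom by blast
  have f0: "0 \<in> {f a..a}" "f 0 = 0" using f_attr unfolding attracting_fixed_point_def by auto
  have g0: "0 \<in> {g b..b}" "g 0 = 0" using g_attr unfolding attracting_fixed_point_def by auto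
  note fs = side[OF \<open>a > 0\<close> fh f_dec f_into f0 f2]
  note gs = side[OF \<open>b > 0\<close> gh g_dec g_into g0 g2]
  obtain H where H0: "H 0 = 0" and Hpos: "\<forall>x\<in>{0<..a}. H x \<in> {0<..b}"
    and Hmono: "\<forall>x\<in>{0..a}. \<forall>y\<in>{0..a}. x < y \<longrightarrow> H x < H y"
    and Hsurj: "{0<..b} \<subseteq> H ` {0<..a}"
    and Hconj: "\<forall>x\<in>{0..a}. H (f (f x)) = g (g (H x))"
    using conj1d[OF fs(3) gs(3)] by auto
  define h where "h x = (if 0 \<le> x then H x else g (H (f' x)))" for x
  define S where "S = {f a..a}"
  define T where "T = {g b..b}"
  have fdec: "\<And>x y. x \<in> S \<Longrightarrow> y \<in> S \<Longrightarrow> x < y \<Longrightarrow> f y < f x" using fs(1) S_def by blast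
  have gdec: "\<And>x y. x \<in> T \<Longrightarrow> y \<in> T \<Longrightarrow> x < y \<Longrightarrow> g y < g x" using gs(1) T_def by blast
  have fneg: "\<And>x. x \<in> {f a..<0} \<Longrightarrow> f' x \<in> {0<..a} \<and> f (f' x) = x" using fs(4) by blast
  have gneg: "\<And>x. x \<in> {0<..b} \<Longrightarrow> g x \<in> {g b..<0}" using gs(5) by blast
  have fneg2: "\<And>x. x \<in> {0<..a} \<Longrightarrow> f x \<in> {f a..<0}" using fs(5) by blast
  have fa: "f a < 0" using fs(2) .
  have gb: "g b < 0" using gs(2) .
  have Hnn: "H x \<in> {0..b}" if xa: "x \<in> {0..a}" for x
  proof (cases "x = 0")
    case True then show ?thesis using H0 \<open>b > 0\<close> by simp
  next
    case False then have "x \<in> {0<..a}" using xa by auto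
    then show ?thesis using Hpos by fastforce
  qed
  have f'f: "f' (f x) = x" if "x \<in> S" for x using homeomorphism_apply1[OF fh] that S_def by auto
  have hmono: "h x < h y" if xy: "x \<in> S" "y \<in> S" "x < y" for x y
  proof (cases "0 \<le> x")
    case True then show ?thesis using Hmono xy S_def h_def by auto
  next
    case False
    have x1: "f' x \<in> {0<..a}" "f (f' x) = x" using fneg[of x] False xy S_def by auto
    have hx: "h x < 0" using gneg[of "H (f' x)"] Hpos x1 False h_def by auto
    show ?thesis
    proof (cases "0 \<le> y")
      case True then show ?thesis using hx Hnn[of y] xy S_def h_def by auto
    next
      case False2: False
      have y1: "f' y \<in> {0<..a}" "f (f' y) = y" using fneg[of y] False2 xy S_def by auto
      have "f' y < f' x"
      proof (rule ccontr)
        assume "\<not> f' y < f' x"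
        then have le: "f' x \<le> f' y" by simp
        have "f (f' y) \<le> f (f' x)"
        proof (cases "f' x = f' y")
          case True then show ?thesis by simp
        next
          case False
          then have lt: "f' x < f' y" using le by simp
          have mem: "f' x \<in> S" "f' y \<in> S" using x1(1) y1(1) f0(1) unfolding S_def by auto
          show ?thesis using fdec[OF mem lt] by simp
        qed
        then show False using x1 y1 xy by auto
      qed
      then have "H (f' y) < H (f' x)" using Hmono x1 y1 by auto
      moreover have "H (f' x) \<in> T" "H (f' y) \<in> T" using Hpos x1(1) y1(1) g0(1) unfolding T_def by fastforce+
      ultimately have "g (H (f' x)) < g (H (f' y))" using gdec by blast
      then show ?thesis using False False2 h_def by auto
    qed
  qed
  have himg: "h ` S = T"
  proof
    show "h ` S \<subseteq> T"
    proof
      fix z assume "z \<in> h ` S"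
      then obtain x where x: "x \<in> S" "z = h x" by auto
      show "z \<in> T"
      proof (cases "0 \<le> x")
        case True then show ?thesis using Hnn[of x] x gb S_def T_def h_def by auto
      next
        case False
        have "f' x \<in> {0<..a}" using fneg[of x] False x S_def by auto
        then show ?thesis using gneg Hpos x False h_def T_def by fastforce
      qed
    qed
    show "T \<subseteq> h ` S"
    proof
      fix z assume z: "z \<in> T"
      show "z \<in> h ` S"
      proof (cases "0 \<le> z")
        case True
        show ?thesis
        proof (cases "z = 0")
          case True
          then have "h 0 = z" using H0 h_def by simp
          then show ?thesis using f0 S_def by (metis image_eqI)
        next
          case False
          then have "z \<in> {0<..b}" using z \<open>0 \<le> z\<close> T_def by auto
          then obtain x where x: "x \<in> {0<..a}" "z = H x" using Hsurj by auto
          then have "h x = z" using h_def by auto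
          then show ?thesis using x S_def fa by (metis image_eqI atLeastAtMost_iff greaterThanAtMost_iff less_imp_le order_trans)
        qed
      next
        case False
        have "z \<in> {g b..<0}" using z False T_def by auto
        then obtain w where w: "w \<in> {0<..b}" "g w = z"
          using gs(4) homeomorphism_apply2 by blast
        obtain y where y: "y \<in> {0<..a}" "w = H y" using Hsurj w by auto
        have fy: "f y \<in> {f a..<0}" using fneg2[OF y(1)] .
        have "f' (f y) = y" using f'f[of y] y f0 S_def by auto
        then have "h (f y) = z" using fy w y h_def by auto
        moreover have "f y \<in> S" using fy S_def \<open>a > 0\<close> by auto
        ultimately show ?thesis by (metis image_eqI)
      qed
    qed
  qed
  have hconj: "g (h x) = h (f x)" if x: "x \<in> S" for x
  proof (cases "0 \<le> x")
    case True
    show ?thesis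
    proof (cases "x = 0")
      case True then show ?thesis using H0 f0 g0 h_def by simp
    next
      case False
      have xp: "x \<in> {0<..a}" using x True False S_def by auto
      have fx: "f x \<in> {f a..<0}" using fneg2[OF xp] .
      have "f' (f x) = x" using f'f x by auto
      then show ?thesis using fx True h_def by auto
    qed
  next
    case False
    have x1: "f' x \<in> {0<..a}" "f (f' x) = x" using fneg[of x] False x S_def by auto
    have "0 < f (f (f' x))" using dyn.below[OF fs(3) x1(1)] by simp
    then have "h (f x) = H (f (f (f' x)))" using x1 h_def by auto
    also have "\<dots> = g (g (H (f' x)))"
    proof -
      have "f' x \<in> {0..a}" using x1 by auto
      then show ?thesis using Hconj by blast
    qed
    also have "\<dots> = g (h x)" using False h_def by auto
    finally show ?thesis by simp
  qed
  have cont: "continuous_on S h"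
    unfolding S_def by (rule mono_cont_Icc[of _ _ _ "g b" b]) (use fa \<open>a > 0\<close> hmono himg S_def T_def in auto)
  have inj: "inj_on h S"
  proof (rule inj_onI)
    fix x y assume "x \<in> S" "y \<in> S" "h x = h y"
    then show "x = y" using hmono[of x y] hmono[of y x] by (cases x y rule: linorder_cases) auto
  qed
  obtain h' where "homeomorphism S T h h'"
    using homeomorphism_compact[OF _ cont himg inj] S_def by auto
  then show ?thesis using hconj S_def T_def by blast
qed

end
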